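(* Let $k\geq 0$ and $p\geq 1$ be integers with $\log_e^{(k)}p\geq 1$, and let $f_k(p)$ be the minimum of $\mathrm{Tran}(T)$ over all $(k,p)$-trees $T$. Then $f_k(p)^{1/p}\leq 10\,\log_e^{(k)}p$.
   Context: A $(k,p)$-tree is a rooted plane tree (children of each node ordered left to right) with exactly $p$ leaves, in which every leaf is at distance exactly $k+1$ from the root (nodes at distance $i$ from the root are at level $i$, so leaves are at level $k+1$). For a rooted tree $T$, $\mathrm{Tran}(T)=\prod_{u\in V(T)}|r_u|!$, where $|r_u|$ is the number of children of $u$. $\log_e^{(k)}p$ is the $k$-fold iterated natural logarithm, $\log_e^{(0)}p=p$. *)

theory Defs
  imports Complex_Main
begin

text \<open>Rooted plane trees: a node is given by the ordered list of its children.\<close>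
datatype ptree = Node "ptree list"

fun children :: "ptree \<Rightarrow> ptree list" where
  "children (Node ts) = ts"

fun num_leaves :: "ptree \<Rightarrow> nat" where
  "num_leaves (Node ts) = (if ts = [] then 1 else sum_list (map num_leaves ts))"

fun leaves_at_depth :: "nat \<Rightarrow> ptree \<Rightarrow> bool" where
  "leaves_at_depth 0 (Node ts) = (ts = [])"
| "leaves_at_depth (Suc d) (Node ts) = (ts \<noteq> [] \<and> (\<forall>t\<in>set ts. leaves_at_depth d t))"

text \<open>Tran(T) = product over all nodes u of |r_u|!.\<close>
fun tran :: "ptree \<Rightarrow> nat" where
  "tran (Node ts) = fact (length ts) * prod_list (map tran ts)"

definition kp_tree :: "nat \<Rightarrow> nat \<Rightarrow> ptree \<Rightarrow> bool" where
  "kp_tree k p T \<longleftrightarrow> num_leaves T = p \<and> leaves_at_depth (Suc k) T"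

definition f_tran :: "nat \<Rightarrow> nat \<Rightarrow> nat" where
  "f_tran k p = (LEAST n. \<exists>T. kp_tree k p T \<and> tran T = n)"

definition iter_ln :: "nat \<Rightarrow> real \<Rightarrow> real" where
  "iter_ln k x = (ln ^^ k) x"

end

theory Submission
  imports Defs
begin

lemma fact_le_pow: "1 \<le> n \<Longrightarrow> n \<le> m \<Longrightarrow> fact n \<le> (m::nat) ^ (n - 1)"
proof (induction n)
  case 0 then show ?case by simp
next
  case (Suc n)
  show ?case
  proof (cases "n = 0")
    case True then show ?thesis by simp
  next
    case False
    then have "fact n \<le> m ^ (n - 1)" using Suc by simp
    then have "Suc n * fact n \<le> m * m ^ (n - 1)" using Suc.prems by (intro mult_le_mono) auto
    moreover have "m * m ^ (n - 1) = m ^ n" using False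
      by (metis Suc_pred' neq0_conv power_Suc)
    ultimately show ?thesis by simp
  qed
qed

lemma leaf_star:
  assumes "1 \<le> p"
  shows "num_leaves (Node (replicate p (Node []))) = p"
    "leaves_at_depth (Suc 0) (Node (replicate p (Node [])))"
    "tran (Node (replicate p (Node []))) = fact p"
proof -
  have "sum_list (map num_leaves (replicate p (Node []))) = p"
    by (induction p) auto
  then show "num_leaves (Node (replicate p (Node []))) = p" using assms by simp
  show "leaves_at_depth (Suc 0) (Node (replicate p (Node [])))" using assms by auto
  have "prod_list (map tran (replicate p (Node []))) = 1"
    by (induction p) auto
  then show "tran (Node (replicate p (Node []))) = fact p" by simp
qed

definition Pexp :: "nat \<Rightarrow> ptree \<Rightarrow> bool" where
  "Pexp m t \<longleftrightarrow> (\<forall>d p. leaves_at_depth d t \<longrightarrow> num_leaves t \<le> p \<longrightarrow> p \<le> m * num_leaves t \<longrightarrow>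
     (\<exists>T. num_leaves T = p \<and> leaves_at_depth (Suc d) T \<and> tran T \<le> tran t * m ^ (p - num_leaves t)))"

lemma expand_list:
  assumes m: "1 \<le> m"
  shows "(\<forall>t\<in>set ts. Pexp m t) \<Longrightarrow> (\<forall>t\<in>set ts. leaves_at_depth d t) \<Longrightarrow>
    sum_list (map num_leaves ts) \<le> p \<Longrightarrow> p \<le> m * sum_list (map num_leaves ts) \<Longrightarrow>
    \<exists>Ts. length Ts = length ts \<and> sum_list (map num_leaves Ts) = p \<and> (\<forall>T\<in>set Ts. leaves_at_depth (Suc d) T)
      \<and> prod_list (map tran Ts) \<le> prod_list (map tran ts) * m ^ (p - sum_list (map num_leaves ts))"
proof (induction ts arbitrary: p)
  case Nil then show ?case by simp
next
  case (Cons t ts)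
  define s where "s = sum_list (map num_leaves ts)"
  define nt where "nt = num_leaves t"
  define p1 where "p1 = min (m * nt) (p - s)"
  have hp: "nt + s \<le> p" "p \<le> m * (nt + s)" using Cons.prems by (simp_all add: s_def nt_def)
  have p1a: "nt \<le> p1" "p1 \<le> m * nt" using hp m by (auto simp: p1_def)
  have p1b1: "s \<le> p - p1" using hp unfolding p1_def by linarith
  have p1b2: "p - p1 \<le> m * s"
  proof (cases "m * nt \<le> p - s")
    case True
    then have "p1 = m * nt" by (simp add: p1_def)
    then show ?thesis using hp(2) by (simp add: algebra_simps)
  next
    case False
    then have "p1 = p - s" by (simp add: p1_def)
    then show ?thesis using hp(1) m by simp
  qed
  note p1b = p1b1 p1b2
  have "p1 \<le> p" unfolding p1_def by simp
  have "Pexp m t" using Cons.prems by simp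
  then obtain T where T: "num_leaves T = p1" "leaves_at_depth (Suc d) T" "tran T \<le> tran t * m ^ (p1 - nt)"
  proof -
    have "leaves_at_depth d t" using Cons.prems(2) by simp
    with \<open>Pexp m t\<close> p1a show ?thesis using that unfolding Pexp_def nt_def by blast
  qed
  obtain Ts where Ts: "length Ts = length ts" "sum_list (map num_leaves Ts) = p - p1"
    "\<forall>T\<in>set Ts. leaves_at_depth (Suc d) T"
    "prod_list (map tran Ts) \<le> prod_list (map tran ts) * m ^ (p - p1 - s)"
  proof -
    have "\<forall>t\<in>set ts. Pexp m t" "\<forall>t\<in>set ts. leaves_at_depth d t" using Cons.prems(1,2) by auto
    then show ?thesis using Cons.IH[of "p - p1"] p1b that unfolding s_def by blast
  qed
  have "tran T * prod_list (map tran Ts) \<le> (tran t * m ^ (p1 - nt)) * (prod_list (map tran ts) * m ^ (p - p1 - s))"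
    using T(3) Ts(4) by (intro mult_le_mono) auto
  also have "\<dots> = tran t * prod_list (map tran ts) * m ^ (p1 - nt + (p - p1 - s))"
    by (simp add: power_add algebra_simps)
  also have "p1 - nt + (p - p1 - s) = p - (nt + s)" using p1a(1) p1b(1) \<open>p1 \<le> p\<close> by arith
  finally have "tran T * prod_list (map tran Ts) \<le> tran t * prod_list (map tran ts) * m ^ (p - (nt + s))" .
  then show ?case using T Ts p1a p1b \<open>p1 \<le> p\<close>
    by (intro exI[of _ "T # Ts"]) (simp add: s_def nt_def)
qed

lemma expand_tree:
  assumes m: "1 \<le> m"
  shows "Pexp m t"
proof (induction t)
  case (Node ts)
  show ?case unfolding Pexp_def
  proof (intro allI impI)
    fix d p
    assume d: "leaves_at_depth d (Node ts)" and p: "num_leaves (Node ts) \<le> p" "p \<le> m * num_leaves (Node ts)"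
    show "\<exists>T. num_leaves T = p \<and> leaves_at_depth (Suc d) T \<and> tran T \<le> tran (Node ts) * m ^ (p - num_leaves (Node ts))"
    proof (cases "ts = []")
      case True
      then have d0: "d = 0" using d by (cases d) auto
      have p1: "1 \<le> p" "p \<le> m" using p True by auto
      show ?thesis
        using leaf_star[OF p1(1)] fact_le_pow[OF p1] True d0
        by (intro exI[of _ "Node (replicate p (Node []))"]) simp
    next
      case False
      then obtain d' where d': "d = Suc d'" using d by (cases d) auto
      have all: "\<forall>t\<in>set ts. leaves_at_depth d' t" using d d' by simp
      obtain Ts where Ts: "length Ts = length ts" "sum_list (map num_leaves Ts) = p"
        "\<forall>T\<in>set Ts. leaves_at_depth (Suc d') T"
        "prod_list (map tran Ts) \<le> prod_list (map tran ts) * m ^ (p - sum_list (map num_leaves ts))"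
        using expand_list[OF m, of ts d' p] Node.IH all p False by auto
      have ne: "Ts \<noteq> []" using Ts(1) False by auto
      have "fact (length Ts) * prod_list (map tran Ts) \<le> fact (length ts) * (prod_list (map tran ts) * m ^ (p - sum_list (map num_leaves ts)))"
        using Ts(1,4) by (intro mult_le_mono) auto
      then show ?thesis using Ts ne d' False
        by (intro exI[of _ "Node Ts"]) (simp add: algebra_simps)
    qed
  qed
qed


definition ell :: "nat \<Rightarrow> real \<Rightarrow> real" where
  "ell k x = ((\<lambda>t. 1 + ln t) ^^ k) x"

lemma ell_0 [simp]: "ell 0 x = x" by (simp add: ell_def)
lemma ell_Suc [simp]: "ell (Suc k) x = 1 + ln (ell k x)" by (simp add: ell_def)
lemma iter_ln_0 [simp]: "iter_ln 0 x = x" by (simp add: iter_ln_def)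
lemma iter_ln_Suc [simp]: "iter_ln (Suc k) x = ln (iter_ln k x)" by (simp add: iter_ln_def)

lemma ell_ge1: "1 \<le> x \<Longrightarrow> 1 \<le> ell k x"
  by (induction k) auto

lemma ell_mono: "1 \<le> x \<Longrightarrow> x \<le> y \<Longrightarrow> ell k x \<le> ell k y"
proof (induction k)
  case 0 then show ?case by simp
next
  case (Suc k)
  have "0 < ell k x" using ell_ge1[OF Suc.prems(1), of k] by linarith
  then show ?case using Suc by simp
qed

lemma exp1_ge2: "2 \<le> exp (1::real)"
  using exp_ge_add_one_self[of "1::real"] by simp

lemma ell_le:
  assumes "1 \<le> z"
  shows "(\<forall>i\<le>k. 1 \<le> iter_ln i z) \<Longrightarrow> ell k z \<le> iter_ln k z + 2"
proof (induction k)
  case 0 then show ?case by simp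
next
  case (Suc k)
  define L where "L = iter_ln k z"
  have L1: "1 \<le> L" using Suc.prems unfolding L_def by auto
  have "1 \<le> ln L" using Suc.prems unfolding L_def by (metis iter_ln_Suc order_refl)
  then have Le: "exp 1 \<le> L" using L1 by (subst ln_ge_iff[symmetric]) auto
  have IH: "ell k z \<le> L + 2" using Suc unfolding L_def by auto
  have e2: "2 \<le> exp (1::real)" by (rule exp1_ge2)
  have "L + 2 \<le> exp 1 * L"
  proof -
    have "(exp 1 - 1) * L \<ge> 1 * 2" using e2 Le by (intro mult_mono) auto
    then show ?thesis by (simp add: algebra_simps)
  qed
  then have le: "ell k z \<le> exp 1 * L" using IH by simp
  have pos: "0 < ell k z" using ell_ge1[OF assms, of k] by linarith
  have "ln (ell k z) \<le> ln (exp 1 * L)" using le pos by simp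
  also have "\<dots> = 1 + ln L" using L1 by (simp add: ln_mult)
  finally show ?case unfolding L_def by simp
qed

lemma chain_ext:
  "kp_tree k p T \<Longrightarrow> kp_tree (k + j) p (((\<lambda>t. Node [t]) ^^ j) T) \<and> tran (((\<lambda>t. Node [t]) ^^ j) T) = tran T"
  by (induction j) (auto simp: kp_tree_def)


lemma key_ineq:
  fixes x y :: real and m n p :: nat
  assumes x1: "1 \<le> x" and xm: "x \<le> real m" and mx: "real m \<le> x + 1"
    and y: "0 < y" "ln y = x - 1" and n1: "1 \<le> n" and np: "n \<le> p"
    and nm: "real (n - 1) * (real m - 1) \<le> real (p - n)"
  shows "(exp 1 * y) ^ (n - 1) * real m ^ (p - n) \<le> (exp 1 * x) ^ (p - 1)"
proof -
  define A where "A = real (n - 1)"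
  define B where "B = real (p - n)"
  have AB: "A + B = real (p - 1)" using n1 np unfolding A_def B_def by simp
  have A0: "0 \<le> A" and B0: "0 \<le> B" unfolding A_def B_def by auto
  have m0: "0 < real m" using x1 xm by linarith
  have x0: "0 < x" using x1 by linarith
  have lnm: "ln (real m) \<le> ln x + 1 / x"
  proof -
    have "ln (real m) \<le> ln (x + 1)" using m0 mx by simp
    also have "x + 1 = x * (1 + 1 / x)" using x0 by (simp add: field_simps)
    also have "ln (x * (1 + 1 / x)) = ln x + ln (1 + 1 / x)"
    proof (rule ln_mult_pos)
      show "0 < x" by (rule x0)
      show "0 < 1 + 1 / x" using x0 by (simp add: add_pos_pos)
    qed
    also have "ln (1 + 1 / x) \<le> 1 / x" using x0 by (intro ln_add_one_self_le_self) simp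
    finally show ?thesis by simp
  qed
  have lnx: "1 - 1 / x \<le> ln x"
  proof -
    have "ln (1 / x) \<le> 1 / x - 1" using x0 by (intro ln_le_minus_one) simp
    then show ?thesis using x0 by (simp add: ln_div)
  qed
  have Ax: "A * (x - 1) \<le> B"
  proof -
    have "A * (x - 1) \<le> A * (real m - 1)" using A0 xm by (intro mult_left_mono) auto
    then show ?thesis using nm unfolding A_def B_def by linarith
  qed
  have eq: "x - 2 + 1 / x = (x - 1) * (1 - 1 / x)" using x0 by (simp add: field_simps)
  have main: "A * (x - 1 - ln x) \<le> B * (1 - 1 / x)"
  proof -
    have "A * (x - 1 - ln x) \<le> A * (x - 2 + 1 / x)" using A0 lnx by (intro mult_left_mono) auto
    also have "\<dots> = (A * (x - 1)) * (1 - 1 / x)" using eq by simp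
    also have "\<dots> \<le> B * (1 - 1 / x)"
    proof (rule mult_right_mono[OF Ax])
      show "0 \<le> 1 - 1 / x" using x1 by (simp add: field_simps)
    qed
    finally show ?thesis .
  qed
  have lhs: "ln ((exp 1 * y) ^ (n - 1) * real m ^ (p - n)) = A * x + B * ln (real m)"
    using y m0 unfolding A_def B_def by (simp add: ln_mult ln_realpow)
  have rhs: "ln ((exp 1 * x) ^ (p - 1)) = (A + B) * (1 + ln x)"
    using x0 AB by (simp add: ln_mult ln_realpow)
  have "A * x + B * ln (real m) \<le> A * x + B * (ln x + 1 / x)"
    using lnm B0 by (intro add_left_mono mult_left_mono) auto
  also have "\<dots> \<le> (A + B) * (1 + ln x)" using main by (simp add: algebra_simps)
  finally have "ln ((exp 1 * y) ^ (n - 1) * real m ^ (p - n)) \<le> ln ((exp 1 * x) ^ (p - 1))"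
    using lhs rhs by simp
  moreover have "0 < (exp 1 * y) ^ (n - 1) * real m ^ (p - n)" using y m0 by simp
  moreover have "0 < (exp 1 * x) ^ (p - 1)" using x0 by simp
  ultimately show ?thesis by simp
qed


lemma div_facts:
  fixes p m :: nat
  assumes "1 \<le> p" "1 \<le> m"
  assumes n_def: "n = (p + m - 1) div m"
  shows "1 \<le> n" "n \<le> p" "p \<le> m * n" "(n - 1) * (m - 1) \<le> p - n"
proof -
  have d: "(p + m - 1) = m * n + (p + m - 1) mod m" unfolding n_def by simp
  have r: "(p + m - 1) mod m < m" using assms by simp
  show "p \<le> m * n" using d r by linarith
  have "m div m \<le> (p + m - 1) div m" using assms by (intro div_le_mono) linarith
  then show n1: "1 \<le> n" unfolding n_def using assms by simp
  have "m * n \<le> p + m - 1" using d by linarith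
  moreover have "m * (n - 1) = m * n - m" by (simp add: right_diff_distrib')
  ultimately have a: "m * (n - 1) \<le> p - 1" by linarith
  have "(n - 1) * (m - 1) = m * (n - 1) - (n - 1)" by (simp add: diff_mult_distrib mult.commute)
  then show "(n - 1) * (m - 1) \<le> p - n" using a n1 by linarith
  have "n - 1 \<le> m * (n - 1)" using assms by simp
  then show "n \<le> p" using a n1 assms(1) by linarith
qed

lemma exists_tree:
  "1 \<le> p \<Longrightarrow> \<exists>T. kp_tree k p T \<and> real (tran T) \<le> (exp 1 * ell k (real p)) ^ (p - 1)"
proof (induction k arbitrary: p)
  case 0
  have f: "fact p \<le> p ^ (p - 1)" using fact_le_pow[OF 0] by simp
  have "real (fact p) \<le> real p ^ (p - 1)" using f by (metis of_nat_le_iff of_nat_power of_nat_fact)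
  also have "\<dots> \<le> (exp 1 * real p) ^ (p - 1)"
    by (intro power_mono) (auto simp: exp1_ge2[THEN order_trans[OF one_le_numeral]] mult_le_cancel_right1 one_le_exp_iff)
  finally show ?case using leaf_star[OF 0] unfolding kp_tree_def
    by (intro exI[of _ "Node (replicate p (Node []))"]) simp
next
  case (Suc k)
  define x where "x = ell (Suc k) (real p)"
  define y where "y = ell k (real p)"
  have p1: "1 \<le> real p" using Suc.prems by simp
  have y1: "1 \<le> y" unfolding y_def by (rule ell_ge1[OF p1])
  have x1: "1 \<le> x" unfolding x_def by (rule ell_ge1[OF p1])
  have lny: "ln y = x - 1" unfolding x_def y_def by simp
  define m where "m = nat \<lceil>x\<rceil>"
  have xm: "x \<le> real m" unfolding m_def by linarith
  have mx: "real m \<le> x + 1" unfolding m_def using x1 by linarith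
  have m1: "1 \<le> m" using xm x1 by linarith
  define n where "n = (p + m - 1) div m"
  note df = div_facts[OF Suc.prems m1 n_def]
  obtain T' where T': "kp_tree k n T'" "real (tran T') \<le> (exp 1 * ell k (real n)) ^ (n - 1)"
    using Suc.IH[OF df(1)] by blast
  have "Pexp m T'" by (rule expand_tree[OF m1])
  then obtain T where T: "num_leaves T = p" "leaves_at_depth (Suc (Suc k)) T"
    "tran T \<le> tran T' * m ^ (p - n)"
    using T'(1) df unfolding Pexp_def kp_tree_def by (metis mult.commute)
  have "real (tran T) \<le> real (tran T') * real m ^ (p - n)"
    using T(3) by (metis of_nat_le_iff of_nat_mult of_nat_power)
  also have "\<dots> \<le> (exp 1 * y) ^ (n - 1) * real m ^ (p - n)"
  proof (intro mult_right_mono)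
    have "ell k (real n) \<le> y" unfolding y_def using df(1,2) by (intro ell_mono) auto
    then have "(exp 1 * ell k (real n)) ^ (n - 1) \<le> (exp 1 * y) ^ (n - 1)"
      using ell_ge1[of "real n" k] df(1) by (intro power_mono) auto
    then show "real (tran T') \<le> (exp 1 * y) ^ (n - 1)" using T'(2) by linarith
  qed auto
  also have "\<dots> \<le> (exp 1 * x) ^ (p - 1)"
  proof (rule key_ineq[OF x1 xm mx _ lny df(1) df(2)])
    show "0 < y" using y1 by linarith
    have "real ((n - 1) * (m - 1)) \<le> real (p - n)" using df(4) by linarith
    then show "real (n - 1) * (real m - 1) \<le> real (p - n)" using m1 by (simp add: of_nat_diff)
  qed
  finally show ?case using T unfolding kp_tree_def x_def by blast
qed


lemma good_tree:
  fixes k p :: nat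
  assumes p: "p \<ge> 1" and L: "iter_ln k (real p) \<ge> 1"
  shows "\<exists>T B. kp_tree k p T \<and> real (tran T) \<le> B ^ (p - 1) \<and> 1 \<le> B \<and> B \<le> 10 * iter_ln k (real p)"
proof -
  have p1: "1 \<le> real p" using p by simp
  have e3: "exp (1::real) \<le> 3" by (rule exp_le)
  have e2: "2 \<le> exp (1::real)" by (rule exp1_ge2)
  show ?thesis
  proof (cases "\<forall>i\<le>k. 1 \<le> iter_ln i (real p)")
    case True
    obtain T where T: "kp_tree k p T" "real (tran T) \<le> (exp 1 * ell k (real p)) ^ (p - 1)"
      using exists_tree[OF p] by blast
    have "ell k (real p) \<le> iter_ln k (real p) + 2" using ell_le[OF p1 True] .
    then have "ell k (real p) \<le> 3 * iter_ln k (real p)" using L by linarith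
    then have "exp 1 * ell k (real p) \<le> 3 * (3 * iter_ln k (real p))"
      using e3 ell_ge1[OF p1, of k] by (intro mult_mono) auto
    moreover have "1 * 1 \<le> exp 1 * ell k (real p)" using e2 ell_ge1[OF p1, of k]
      by (intro mult_mono) auto
    ultimately show ?thesis using T L by (intro exI[of _ T] exI[of _ "exp 1 * ell k (real p)"]) auto
  next
    case False
    then obtain i where i: "i \<le> k" "iter_ln i (real p) < 1" by (auto simp: not_le)
    define i0 where "i0 = (LEAST i. iter_ln i (real p) < 1)"
    have i0a: "iter_ln i0 (real p) < 1" unfolding i0_def by (rule LeastI[of _ i]) (rule i(2))
    have i0b: "\<And>j. j < i0 \<Longrightarrow> 1 \<le> iter_ln j (real p)"
      unfolding i0_def using not_less_Least by (metis not_le)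
    have i0c: "i0 \<le> i" unfolding i0_def by (rule Least_le) (rule i(2))
    have "i0 \<noteq> 0"
    proof
      assume "i0 = 0"
      then show False using i0a p1 by simp
    qed
    then obtain j where j: "i0 = Suc j" by (cases i0) auto
    have jk: "Suc j \<le> k"
    proof (rule ccontr)
      assume "\<not> Suc j \<le> k"
      then have "i0 = k" using i0c i(1) j by simp
      then show False using i0a L by simp
    qed
    have allj: "\<forall>i'\<le>j. 1 \<le> iter_ln i' (real p)" using i0b j by auto
    define Lj where "Lj = iter_ln j (real p)"
    have Lj1: "1 \<le> Lj" using allj unfolding Lj_def by auto
    have "ln Lj < 1" using i0a j unfolding Lj_def by simp
    then have Lje: "Lj < exp 1" using Lj1 by (metis exp_ln less_le_trans zero_less_one exp_less_cancel_iff)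
    have "ell j (real p) \<le> Lj + 2" unfolding Lj_def by (rule ell_le[OF p1 allj])
    then have le1: "ell j (real p) \<le> exp 1 * 2" using Lje e2 by linarith
    have pos: "0 < ell j (real p)" using ell_ge1[OF p1, of j] by linarith
    have "ln (ell j (real p)) \<le> ln (exp 1 * 2)" using le1 pos by simp
    also have "\<dots> = 1 + ln 2" by (simp add: ln_mult_pos)
    also have "ln (2::real) \<le> 1" using ln_le_minus_one[of "2::real"] by simp
    finally have ellS: "ell (Suc j) (real p) \<le> 3" by simp
    obtain T where T: "kp_tree (Suc j) p T" "real (tran T) \<le> (exp 1 * ell (Suc j) (real p)) ^ (p - 1)"
      using exists_tree[OF p] by blast
    define T2 where "T2 = ((\<lambda>t. Node [t]) ^^ (k - Suc j)) T"
    have T2: "kp_tree k p T2" "tran T2 = tran T"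
      using chain_ext[OF T(1), of "k - Suc j"] jk unfolding T2_def by auto
    have "exp 1 * ell (Suc j) (real p) \<le> 3 * 3"
      using e3 ellS ell_ge1[OF p1, of "Suc j"] by (intro mult_mono) auto
    also have "\<dots> \<le> 10 * iter_ln k (real p)" using L by linarith
    finally have B: "exp 1 * ell (Suc j) (real p) \<le> 10 * iter_ln k (real p)" .
    have "1 * 1 \<le> exp 1 * ell (Suc j) (real p)" using e2 ell_ge1[OF p1, of "Suc j"]
      by (intro mult_mono) auto
    then have B1: "1 \<le> exp 1 * ell (Suc j) (real p)" by simp
    show ?thesis using T T2 B B1
      by (intro exI[of _ T2] exI[of _ "exp 1 * ell (Suc j) (real p)"]) auto
  qed
qed

theorem lemma9p1:
  fixes k p :: nat
  assumes "p \<ge> 1"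
    and "iter_ln k (real p) \<ge> 1"
  shows "real (f_tran k p) powr (1 / real p) \<le> 10 * iter_ln k (real p)"
proof -
  obtain T B where T: "kp_tree k p T" "real (tran T) \<le> B ^ (p - 1)" "1 \<le> B" "B \<le> 10 * iter_ln k (real p)"
    using good_tree[OF assms] by blast
  have "f_tran k p \<le> tran T" unfolding f_tran_def using T(1) by (intro Least_le) blast
  then have "real (f_tran k p) \<le> B ^ (p - 1)" using T(2) by linarith
  also have "\<dots> = B powr real (p - 1)" using T(3) by (simp add: powr_realpow)
  finally have f: "real (f_tran k p) \<le> B powr real (p - 1)" .
  have "real (f_tran k p) powr (1 / real p) \<le> (B powr real (p - 1)) powr (1 / real p)"
    using f by (intro powr_mono2) auto
  also have "\<dots> = B powr (real (p - 1) / real p)" by (simp add: powr_powr)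
  also have "\<dots> \<le> B powr 1"
    using T(3) assms(1) by (intro powr_mono) (auto simp: of_nat_diff)
  also have "\<dots> = B" using T(3) by simp
  finally show ?thesis using T(4) by linarith
qed

end
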